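(* Let $G$ be a countable discrete group and $S=S^{-1}\subset G$ a finite symmetric generating set. Then $\tilde\lambda(\mathcal X_S)\ge 1+\rho(S)$.
   Context: $C^*_\lambda(G)$ is the reduced group C$^*$-algebra with left regular representation $\lambda$, and $\mathcal X_S=\mathrm{span}\{\lambda(s):s\in S\cup\{e\}\}\subset C^*_\lambda(G)$. $E:C^*_\lambda(G)\to\mathbb C1$ is the canonical trace-preserving conditional expectation. For self-adjoint $x\in\mathcal X_S\setminus\{0\}$ with $E(x)=0$, let $a,b>0$ be the smallest constants with $a1-x\ge0$ and $b1+x\ge0$, and $\rho(x)=\max\{a/b,b/a\}$; $\rho(S)=\sup\{\rho(x):x=x^*\in\mathcal X_S\setminus\{0\},\ E(x)=0\}$. For an operator system $\mathcal X$ with unit $1$, $\mathrm{CP}_1(\mathcal X)$ is the set of completely positive $\varphi:\mathcal X\to\mathcal X$ with $\varphi(\mathbb C1)\subset\mathbb C1$, and $\tilde\lambda(\mathcal X)=\inf\{\|\varphi(1)\|:\varphi\in\mathrm{CP}_1(\mathcal X),\ \varphi(\mathcal X)\subset\mathbb C1,\ \varphi-\mathrm{id}_{\mathcal X}\text{ completely positive}\}$. *)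

theory Defs
  imports "HOL-Algebra.Generated_Groups" "HOL-Library.Extended_Real" "HOL-Library.Countable_Set"
begin

text \<open>Vectors of l2(G): we use finitely supported vectors (a dense subspace).
  An element of X_S = span of lambda(s), s in S union e, is represented by its
  coefficient function c, with c t = 0 outside S union e; it acts as
  the operator sum_t c t * lambda(t), where (lambda(t) xi)(h) = xi(t^-1 h).\<close>

definition fin_vec :: "('a, 'b) monoid_scheme \<Rightarrow> ('a \<Rightarrow> complex) \<Rightarrow> bool" where
  "fin_vec G \<xi> \<longleftrightarrow> finite {g. \<xi> g \<noteq> 0} \<and> {g. \<xi> g \<noteq> 0} \<subseteq> carrier G"

definition ip :: "('a \<Rightarrow> complex) \<Rightarrow> ('a \<Rightarrow> complex) \<Rightarrow> complex" where
  "ip \<eta> \<zeta> = (\<Sum>g | \<zeta> g \<noteq> 0. cnj (\<eta> g) * \<zeta> g)"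

definition vnorm :: "('a \<Rightarrow> complex) \<Rightarrow> real" where
  "vnorm \<xi> = sqrt (\<Sum>g | \<xi> g \<noteq> 0. (cmod (\<xi> g))\<^sup>2)"

definition lam_apply :: "('a, 'b) monoid_scheme \<Rightarrow> ('a \<Rightarrow> complex) \<Rightarrow> ('a \<Rightarrow> complex) \<Rightarrow> ('a \<Rightarrow> complex)" where
  "lam_apply G c \<xi> = (\<lambda>h. if h \<in> carrier G
      then (\<Sum>t | t \<in> carrier G \<and> c t \<noteq> 0. c t * \<xi> (inv\<^bsub>G\<^esub> t \<otimes>\<^bsub>G\<^esub> h)) else 0)"

definition unitT :: "('a, 'b) monoid_scheme \<Rightarrow> 'a set \<Rightarrow> 'a set" where
  "unitT G S = insert \<one>\<^bsub>G\<^esub> S"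

definition inX :: "('a, 'b) monoid_scheme \<Rightarrow> 'a set \<Rightarrow> ('a \<Rightarrow> complex) \<Rightarrow> bool" where
  "inX G S c \<longleftrightarrow> (\<forall>t. t \<notin> unitT G S \<longrightarrow> c t = 0)"

definition one_op :: "('a, 'b) monoid_scheme \<Rightarrow> ('a \<Rightarrow> complex)" where
  "one_op G = (\<lambda>g. if g = \<one>\<^bsub>G\<^esub> then 1 else 0)"

definition scalar_op :: "('a, 'b) monoid_scheme \<Rightarrow> ('a \<Rightarrow> complex) \<Rightarrow> bool" where
  "scalar_op G c \<longleftrightarrow> (\<exists>z. c = (\<lambda>g. z * one_op G g))"

definition nonneg_c :: "complex \<Rightarrow> bool" where
  "nonneg_c z \<longleftrightarrow> Im z = 0 \<and> 0 \<le> Re z"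

definition mpos :: "('a, 'b) monoid_scheme \<Rightarrow> nat \<Rightarrow> (nat \<Rightarrow> nat \<Rightarrow> 'a \<Rightarrow> complex) \<Rightarrow> bool" where
  "mpos G n x \<longleftrightarrow> (\<forall>\<xi> :: nat \<Rightarrow> 'a \<Rightarrow> complex. (\<forall>i<n. fin_vec G (\<xi> i)) \<longrightarrow>
      nonneg_c (\<Sum>i<n. \<Sum>j<n. ip (\<xi> i) (lam_apply G (x i j) (\<xi> j))))"

definition pos_op :: "('a, 'b) monoid_scheme \<Rightarrow> ('a \<Rightarrow> complex) \<Rightarrow> bool" where
  "pos_op G c \<longleftrightarrow> (\<forall>\<xi>. fin_vec G \<xi> \<longrightarrow> nonneg_c (ip \<xi> (lam_apply G c \<xi>)))"

definition self_adj :: "('a, 'b) monoid_scheme \<Rightarrow> ('a \<Rightarrow> complex) \<Rightarrow> bool" where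
  "self_adj G c \<longleftrightarrow> (\<forall>\<xi> \<eta>. fin_vec G \<xi> \<longrightarrow> fin_vec G \<eta> \<longrightarrow>
      ip \<eta> (lam_apply G c \<xi>) = ip (lam_apply G c \<eta>) \<xi>)"

definition nonzero_op :: "('a, 'b) monoid_scheme \<Rightarrow> ('a \<Rightarrow> complex) \<Rightarrow> bool" where
  "nonzero_op G c \<longleftrightarrow> (\<exists>\<xi>. fin_vec G \<xi> \<and> lam_apply G c \<xi> \<noteq> (\<lambda>_. 0))"

definition cond_exp :: "('a, 'b) monoid_scheme \<Rightarrow> ('a \<Rightarrow> complex) \<Rightarrow> complex" where
  "cond_exp G c = ip (one_op G) (lam_apply G c (one_op G))"

definition op_norm :: "('a, 'b) monoid_scheme \<Rightarrow> ('a \<Rightarrow> complex) \<Rightarrow> real" where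
  "op_norm G c = Sup {vnorm (lam_apply G c \<xi>) | \<xi>. fin_vec G \<xi> \<and> vnorm \<xi> \<le> 1}"

definition const_a :: "('a, 'b) monoid_scheme \<Rightarrow> ('a \<Rightarrow> complex) \<Rightarrow> real" where
  "const_a G x = Inf {a::real. a > 0 \<and> pos_op G (\<lambda>g. complex_of_real a * one_op G g - x g)}"

definition const_b :: "('a, 'b) monoid_scheme \<Rightarrow> ('a \<Rightarrow> complex) \<Rightarrow> real" where
  "const_b G x = Inf {b::real. b > 0 \<and> pos_op G (\<lambda>g. complex_of_real b * one_op G g + x g)}"

definition rho_x :: "('a, 'b) monoid_scheme \<Rightarrow> ('a \<Rightarrow> complex) \<Rightarrow> real" where
  "rho_x G x = max (const_a G x / const_b G x) (const_b G x / const_a G x)"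

definition rho_S :: "('a, 'b) monoid_scheme \<Rightarrow> 'a set \<Rightarrow> ereal" where
  "rho_S G S = Sup ((\<lambda>x. ereal (rho_x G x)) `
      {x. inX G S x \<and> self_adj G x \<and> nonzero_op G x \<and> cond_exp G x = 0})"

definition lin_X :: "('a, 'b) monoid_scheme \<Rightarrow> 'a set \<Rightarrow> (('a \<Rightarrow> complex) \<Rightarrow> ('a \<Rightarrow> complex)) \<Rightarrow> bool" where
  "lin_X G S \<phi> \<longleftrightarrow> (\<forall>x. inX G S x \<longrightarrow> inX G S (\<phi> x)) \<and>
     (\<forall>x y. inX G S x \<longrightarrow> inX G S y \<longrightarrow> \<phi> (\<lambda>g. x g + y g) = (\<lambda>g. \<phi> x g + \<phi> y g)) \<and>
     (\<forall>z x. inX G S x \<longrightarrow> \<phi> (\<lambda>g. z * x g) = (\<lambda>g. z * \<phi> x g))"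

definition CP_X :: "('a, 'b) monoid_scheme \<Rightarrow> 'a set \<Rightarrow> (('a \<Rightarrow> complex) \<Rightarrow> ('a \<Rightarrow> complex)) \<Rightarrow> bool" where
  "CP_X G S \<phi> \<longleftrightarrow> lin_X G S \<phi> \<and>
     (\<forall>n x. (\<forall>i<n. \<forall>j<n. inX G S (x i j)) \<longrightarrow> mpos G n x \<longrightarrow> mpos G n (\<lambda>i j. \<phi> (x i j)))"

definition CP1_X :: "('a, 'b) monoid_scheme \<Rightarrow> 'a set \<Rightarrow> (('a \<Rightarrow> complex) \<Rightarrow> ('a \<Rightarrow> complex)) \<Rightarrow> bool" where
  "CP1_X G S \<phi> \<longleftrightarrow> CP_X G S \<phi> \<and> (\<forall>z. scalar_op G (\<phi> (\<lambda>g. z * one_op G g)))"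

definition tilde_lambda :: "('a, 'b) monoid_scheme \<Rightarrow> 'a set \<Rightarrow> ereal" where
  "tilde_lambda G S = Inf ((\<lambda>\<phi>. ereal (op_norm G (\<phi> (one_op G)))) `
      {\<phi>. CP1_X G S \<phi> \<and> (\<forall>x. inX G S x \<longrightarrow> scalar_op G (\<phi> x)) \<and>
           CP_X G S (\<lambda>x g. \<phi> x g - x g)})"

end

theory Submission
  imports Defs
begin


lemma fin_vec_fin: "fin_vec G \<xi> \<Longrightarrow> finite {g. \<xi> g \<noteq> 0}" by (simp add: fin_vec_def)
lemma fin_vec_sub: "fin_vec G \<xi> \<Longrightarrow> \<xi> g \<noteq> 0 \<Longrightarrow> g \<in> carrier G" by (auto simp: fin_vec_def)

lemma ip_eq_sum:
  assumes "finite F" "finite {g. \<zeta> g \<noteq> 0}" "\<And>g. \<zeta> g \<noteq> 0 \<Longrightarrow> \<eta> g \<noteq> 0 \<Longrightarrow> g \<in> F"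
  shows "ip \<eta> \<zeta> = (\<Sum>g\<in>F. cnj (\<eta> g) * \<zeta> g)"
proof -
  have "ip \<eta> \<zeta> = (\<Sum>g\<in>{g. \<zeta> g \<noteq> 0} \<union> F. cnj (\<eta> g) * \<zeta> g)"
    unfolding ip_def using assms by (intro sum.mono_neutral_left) auto
  also have "\<dots> = (\<Sum>g\<in>F. cnj (\<eta> g) * \<zeta> g)"
    using assms by (intro sum.mono_neutral_left[symmetric]) auto
  finally show ?thesis .
qed

context group begin

lemma lam_inner:
  assumes T: "finite {t. y t \<noteq> 0}" and H: "finite H" "H \<subseteq> carrier G"
    and z: "\<And>h. \<zeta> h \<noteq> 0 \<Longrightarrow> h \<in> H" and k: "k \<in> carrier G"
  shows "lam_apply G y \<zeta> k = (\<Sum>h\<in>H. y (k \<otimes> inv h) * \<zeta> h)"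
proof -
  let ?T = "{t. t \<in> carrier G \<and> y t \<noteq> 0}"
  have fT: "finite ?T" using T by (auto intro: finite_subset)
  have "(\<Sum>h\<in>H. y (k \<otimes> inv h) * \<zeta> h) = (\<Sum>h\<in>H. \<Sum>t\<in>?T. if t = k \<otimes> inv h then y t * \<zeta> h else 0)"
  proof (rule sum.cong[OF refl])
    fix h assume "h \<in> H"
    then have "k \<otimes> inv h \<in> carrier G" using H k by auto
    then show "y (k \<otimes> inv h) * \<zeta> h = (\<Sum>t\<in>?T. if t = k \<otimes> inv h then y t * \<zeta> h else 0)"
      using fT by (simp add: sum.delta')
  qed
  also have "\<dots> = (\<Sum>t\<in>?T. \<Sum>h\<in>H. if t = k \<otimes> inv h then y t * \<zeta> h else 0)"
    by (rule sum.swap)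
  also have "\<dots> = (\<Sum>t\<in>?T. y t * \<zeta> (inv t \<otimes> k))"
  proof (rule sum.cong[OF refl])
    fix t assume t: "t \<in> ?T"
    have eq: "\<And>h. h \<in> H \<Longrightarrow> (t = k \<otimes> inv h) = (h = inv t \<otimes> k)"
    proof -
      fix h assume "h \<in> H" then have h: "h \<in> carrier G" using H by auto
      show "(t = k \<otimes> inv h) = (h = inv t \<otimes> k)"
        using inv_solve_right[of t k h] inv_solve_left[of h t k] t h k by auto
    qed
    have "(\<Sum>h\<in>H. if t = k \<otimes> inv h then y t * \<zeta> h else 0) = (\<Sum>h\<in>H. if h = inv t \<otimes> k then y t * \<zeta> h else 0)"
      by (rule sum.cong[OF refl]) (simp add: eq)
    also have "\<dots> = y t * \<zeta> (inv t \<otimes> k)"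
      using H z by (auto simp: sum.delta')
    finally show "(\<Sum>h\<in>H. if t = k \<otimes> inv h then y t * \<zeta> h else 0) = y t * \<zeta> (inv t \<otimes> k)" .
  qed
  finally show ?thesis using k unfolding lam_apply_def by simp
qed

lemma lam_supp_fin:
  assumes T: "finite {t. y t \<noteq> 0}" and z: "fin_vec G \<zeta>"
  shows "finite {g. lam_apply G y \<zeta> g \<noteq> 0}"
proof -
  let ?T = "{t. t \<in> carrier G \<and> y t \<noteq> 0}" and ?Z = "{g. \<zeta> g \<noteq> 0}"
  have "{g. lam_apply G y \<zeta> g \<noteq> 0} \<subseteq> (\<lambda>(t,h). t \<otimes> h) ` (?T \<times> ?Z)"
  proof
    fix g assume "g \<in> {g. lam_apply G y \<zeta> g \<noteq> 0}"
    then have g: "g \<in> carrier G" and ne: "(\<Sum>t\<in>?T. y t * \<zeta> (inv t \<otimes> g)) \<noteq> 0"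
      unfolding lam_apply_def by (auto split: if_splits)
    then obtain t where t0: "t \<in> ?T" "y t * \<zeta> (inv t \<otimes> g) \<noteq> 0"
      using sum.not_neutral_contains_not_neutral[OF ne] by blast
    then have t: "t \<in> ?T" "\<zeta> (inv t \<otimes> g) \<noteq> 0" by auto
    then have "g = t \<otimes> (inv t \<otimes> g)" using g inv_solve_left[of "inv t \<otimes> g" t g] by auto
    then show "g \<in> (\<lambda>(t,h). t \<otimes> h) ` (?T \<times> ?Z)" using t by force
  qed
  moreover have "finite ((\<lambda>(t,h). t \<otimes> h) ` (?T \<times> ?Z))" using T fin_vec_fin[OF z] by (auto intro: finite_subset)
  ultimately show ?thesis by (metis (no_types, lifting) finite_subset)
qed

lemma ip_lam:
  assumes T: "finite {t. y t \<noteq> 0}" and F: "finite F" "F \<subseteq> carrier G" and H: "finite H" "H \<subseteq> carrier G"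
    and e: "fin_vec G \<eta>" and z: "fin_vec G \<zeta>"
    and eF: "\<And>h. \<eta> h \<noteq> 0 \<Longrightarrow> h \<in> F" and zH: "\<And>h. \<zeta> h \<noteq> 0 \<Longrightarrow> h \<in> H"
  shows "ip \<eta> (lam_apply G y \<zeta>) = (\<Sum>k\<in>F. \<Sum>h\<in>H. cnj (\<eta> k) * y (k \<otimes> inv h) * \<zeta> h)"
proof -
  have "ip \<eta> (lam_apply G y \<zeta>) = (\<Sum>k\<in>F. cnj (\<eta> k) * lam_apply G y \<zeta> k)"
    by (rule ip_eq_sum[OF F(1) lam_supp_fin[OF T z]]) (use eF in auto)
  also have "\<dots> = (\<Sum>k\<in>F. cnj (\<eta> k) * (\<Sum>h\<in>H. y (k \<otimes> inv h) * \<zeta> h))"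
    by (rule sum.cong[OF refl]) (use F lam_inner[OF T H zH] in auto)
  finally show ?thesis by (simp add: sum_distrib_left mult.assoc)
qed

end


lemma nonneg_c_sum: "(\<And>i. i \<in> A \<Longrightarrow> nonneg_c (f i)) \<Longrightarrow> nonneg_c (\<Sum>i\<in>A. f i)"
  unfolding nonneg_c_def by (induction A rule: infinite_finite_induct) auto

lemma fiber_sum:
  fixes a :: "'x \<Rightarrow> complex"
  assumes "finite I"
  shows "(\<Sum>w\<in>k ` I. (\<Sum>i\<in>{i\<in>I. k i = w}. a i) * R w) = (\<Sum>i\<in>I. a i * R (k i))"
proof -
  have "(\<Sum>w\<in>k ` I. (\<Sum>i\<in>{i\<in>I. k i = w}. a i) * R w) = (\<Sum>w\<in>k ` I. \<Sum>i\<in>{i\<in>I. k i = w}. a i * R (k i))"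
  proof (rule sum.cong[OF refl])
    fix w assume "w \<in> k ` I"
    have "(\<Sum>i\<in>{i\<in>I. k i = w}. a i) * R w = (\<Sum>i\<in>{i\<in>I. k i = w}. a i * R w)" by (rule sum_distrib_right)
    also have "\<dots> = (\<Sum>i\<in>{i\<in>I. k i = w}. a i * R (k i))" by (rule sum.cong) auto
    finally show "(\<Sum>i\<in>{i\<in>I. k i = w}. a i) * R w = (\<Sum>i\<in>{i\<in>I. k i = w}. a i * R (k i))" .
  qed
  also have "\<dots> = (\<Sum>i\<in>I. a i * R (k i))"
    using sum.image_gen[OF assms, of "\<lambda>i. a i * R (k i)" k] by simp
  finally show ?thesis .
qed

context group begin

lemma assoc_cancel: "a \<in> carrier G \<Longrightarrow> b \<in> carrier G \<Longrightarrow> c \<in> carrier G \<Longrightarrow> (a \<otimes> inv b) \<otimes> (b \<otimes> c) = a \<otimes> c"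
  by (simp add: m_assoc[symmetric]) (simp add: m_assoc)

lemma fell_mpos:
  assumes fy: "finite {t. y t \<noteq> 0}" and py: "pos_op G y" and k: "\<And>i. i < n \<Longrightarrow> k i \<in> carrier G"
  shows "mpos G n (\<lambda>i j t. if t = k i \<otimes> inv (k j) then y t else 0)"
  unfolding mpos_def
proof (intro allI impI)
  fix \<eta> :: "nat \<Rightarrow> 'a \<Rightarrow> complex"
  assume fv: "\<forall>i<n. fin_vec G (\<eta> i)"
  define Y where "Y = (\<lambda>i j t. if t = k i \<otimes> inv (k j) then y t else 0)"
  define U where "U = (\<Union>i<n. {g. \<eta> i g \<noteq> 0})"
  have fU: "finite U" using fv by (auto simp: U_def fin_vec_def)
  have UG: "U \<subseteq> carrier G" using fv by (auto simp: U_def fin_vec_def)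
  have inU: "\<And>i g. i < n \<Longrightarrow> \<eta> i g \<noteq> 0 \<Longrightarrow> g \<in> U" by (auto simp: U_def)
  define M where "M = (\<lambda>(i,u). inv (k i) \<otimes> u) ` ({..<n} \<times> U)"
  have fM: "finite M" using fU by (simp add: M_def)
  have MG: "M \<subseteq> carrier G" using UG k by (auto simp: M_def)
  define a where "a = (\<lambda>m i. \<eta> i (k i \<otimes> m))"
  have fY: "finite {t. Y i j t \<noteq> 0}" for i j
    by (rule finite_subset[of _ "{k i \<otimes> inv (k j)}"]) (auto simp: Y_def)
  have step: "ip (\<eta> i) (lam_apply G (Y i j) (\<eta> j)) =
      (\<Sum>m\<in>M. cnj (a m i) * y (k i \<otimes> inv (k j)) * a m j)" if i: "i < n" and j: "j < n" for i j
  proof -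
    have ki: "k i \<in> carrier G" and kj: "k j \<in> carrier G" using k i j by auto
    let ?p = "k i \<otimes> inv (k j)"
    have pG: "?p \<in> carrier G" using ki kj by auto
    define f where "f = (\<lambda>u. cnj (\<eta> i u) * y ?p * \<eta> j (k j \<otimes> inv (k i) \<otimes> u))"
    have "ip (\<eta> i) (lam_apply G (Y i j) (\<eta> j)) = (\<Sum>u\<in>U. \<Sum>v\<in>U. cnj (\<eta> i u) * Y i j (u \<otimes> inv v) * \<eta> j v)"
      by (rule ip_lam[OF fY fU UG fU UG]) (use fv i j inU in auto)
    also have "\<dots> = (\<Sum>u\<in>U. f u)"
    proof (rule sum.cong[OF refl])
      fix u assume u: "u \<in> U"
      then have uG: "u \<in> carrier G" using UG by auto
      define w where "w = k j \<otimes> inv (k i) \<otimes> u"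
      have wG: "w \<in> carrier G" using ki kj uG by (simp add: w_def)
      have eqv: "(u \<otimes> inv v = ?p) = (v = w)" if vG: "v \<in> carrier G" for v
      proof -
        have "(u \<otimes> inv v = ?p) = (u = ?p \<otimes> v)" using inv_solve_right'[of ?p u v] vG uG pG by auto
        also have "\<dots> = (v = inv ?p \<otimes> u)" using inv_solve_left[of v ?p u] vG uG pG by auto
        also have "inv ?p = k j \<otimes> inv (k i)" using ki kj by (simp add: inv_mult_group)
        finally show ?thesis by (simp add: w_def)
      qed
      have pw: "u \<otimes> inv w = ?p" using eqv[OF wG] by simp
      have "(\<Sum>v\<in>U. cnj (\<eta> i u) * Y i j (u \<otimes> inv v) * \<eta> j v) = (\<Sum>v\<in>U. if v = w then cnj (\<eta> i u) * y ?p * \<eta> j v else 0)"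
        by (rule sum.cong[OF refl]) (use eqv pw UG in \<open>auto simp: Y_def\<close>)
      also have "\<dots> = f u"
        using fU inU[OF j, of w] by (auto simp: f_def w_def sum.delta')
      finally show "(\<Sum>v\<in>U. cnj (\<eta> i u) * Y i j (u \<otimes> inv v) * \<eta> j v) = f u" .
    qed
    also have "\<dots> = (\<Sum>u\<in>(\<lambda>m. k i \<otimes> m) ` M. f u)"
    proof (rule sum.mono_neutral_left)
      show "finite ((\<lambda>m. k i \<otimes> m) ` M)" using fM by simp
      show "U \<subseteq> (\<lambda>m. k i \<otimes> m) ` M"
      proof
        fix u assume u: "u \<in> U"
        then have "inv (k i) \<otimes> u \<in> M" using i by (auto simp: M_def)
        moreover have "u = k i \<otimes> (inv (k i) \<otimes> u)" using inv_solve_left[of "inv (k i) \<otimes> u" "k i" u] u UG ki by auto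
        ultimately show "u \<in> (\<lambda>m. k i \<otimes> m) ` M" by blast
      qed
      show "\<forall>u\<in>(\<lambda>m. k i \<otimes> m) ` M - U. f u = 0" using inU[OF i] by (auto simp: f_def)
    qed
    also have "\<dots> = (\<Sum>m\<in>M. f (k i \<otimes> m))"
      by (rule sum.reindex[unfolded comp_def]) (rule inj_onI, use MG ki in \<open>metis Units_l_cancel Units_eq subsetD\<close>)
    also have "\<dots> = (\<Sum>m\<in>M. cnj (a m i) * y ?p * a m j)"
      by (rule sum.cong[OF refl]) (use MG ki kj in \<open>auto simp: f_def a_def assoc_cancel\<close>)
    finally show ?thesis .
  qed
  have "(\<Sum>i<n. \<Sum>j<n. ip (\<eta> i) (lam_apply G (Y i j) (\<eta> j))) =
        (\<Sum>i<n. \<Sum>j<n. \<Sum>m\<in>M. cnj (a m i) * y (k i \<otimes> inv (k j)) * a m j)"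
    by (simp add: step)
  also have "\<dots> = (\<Sum>i<n. \<Sum>m\<in>M. \<Sum>j<n. cnj (a m i) * y (k i \<otimes> inv (k j)) * a m j)"
    by (rule sum.cong[OF refl], rule sum.swap)
  also have "\<dots> = (\<Sum>m\<in>M. \<Sum>i<n. \<Sum>j<n. cnj (a m i) * y (k i \<otimes> inv (k j)) * a m j)"
    by (rule sum.swap)
  finally have eq: "(\<Sum>i<n. \<Sum>j<n. ip (\<eta> i) (lam_apply G (Y i j) (\<eta> j))) =
        (\<Sum>m\<in>M. \<Sum>i<n. \<Sum>j<n. cnj (a m i) * y (k i \<otimes> inv (k j)) * a m j)" .
  have "nonneg_c (\<Sum>i<n. \<Sum>j<n. cnj (a m i) * y (k i \<otimes> inv (k j)) * a m j)" for m
  proof -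
    define K where "K = k ` {..<n}"
    define \<zeta> where "\<zeta> = (\<lambda>w. \<Sum>i\<in>{i\<in>{..<n}. k i = w}. a m i)"
    have fK: "finite K" and KG: "K \<subseteq> carrier G" using k by (auto simp: K_def)
    have zK: "\<zeta> w \<noteq> 0 \<Longrightarrow> w \<in> K" for w
    proof -
      assume "\<zeta> w \<noteq> 0"
      then have "{i\<in>{..<n}. k i = w} \<noteq> {}" unfolding \<zeta>_def by (metis sum.empty)
      then show "w \<in> K" unfolding K_def by blast
    qed
    have fz: "fin_vec G \<zeta>" unfolding fin_vec_def using zK fK KG by (auto intro: finite_subset)
    have "ip \<zeta> (lam_apply G y \<zeta>) = (\<Sum>w\<in>K. \<Sum>w'\<in>K. cnj (\<zeta> w) * y (w \<otimes> inv w') * \<zeta> w')"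
      by (rule ip_lam[OF fy fK KG fK KG fz fz zK zK])
    also have "\<dots> = (\<Sum>w\<in>K. cnj (\<zeta> w) * (\<Sum>w'\<in>K. \<zeta> w' * y (w \<otimes> inv w')))"
      by (simp add: sum_distrib_left mult_ac)
    also have "\<dots> = (\<Sum>w\<in>K. cnj (\<zeta> w) * (\<Sum>j<n. a m j * y (w \<otimes> inv (k j))))"
      unfolding K_def \<zeta>_def by (subst fiber_sum) auto
    also have "\<dots> = (\<Sum>w\<in>K. (\<Sum>i\<in>{i\<in>{..<n}. k i = w}. cnj (a m i)) * (\<Sum>j<n. a m j * y (w \<otimes> inv (k j))))"
      unfolding \<zeta>_def by (simp add: cnj_sum)
    also have "\<dots> = (\<Sum>i<n. cnj (a m i) * (\<Sum>j<n. a m j * y (k i \<otimes> inv (k j))))"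
      unfolding K_def by (subst fiber_sum) auto
    also have "\<dots> = (\<Sum>i<n. \<Sum>j<n. cnj (a m i) * y (k i \<otimes> inv (k j)) * a m j)"
      by (simp add: sum_distrib_left mult_ac)
    finally show ?thesis using py fz unfolding pos_op_def by metis
  qed
  then show "nonneg_c (\<Sum>i<n. \<Sum>j<n. ip (\<eta> i) (lam_apply G (\<lambda>t. if t = k i \<otimes> inv (k j) then y t else 0) (\<eta> j)))"
    using eq unfolding Y_def by (simp add: nonneg_c_sum)
qed

end


lemma inX_fin: "finite S \<Longrightarrow> inX G S y \<Longrightarrow> finite {t. y t \<noteq> 0}"
  unfolding inX_def unitT_def by (rule finite_subset[of _ "insert \<one>\<^bsub>G\<^esub> S"]) auto

lemma inX_one: "inX G S (one_op G)"
  unfolding inX_def unitT_def one_op_def by auto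

context group begin

lemma main_ineq:
  assumes CP: "CP_X G S (\<lambda>x g. \<phi> x g - x g)" and lin: "lin_X G S \<phi>"
    and sc: "\<forall>x. inX G S x \<longrightarrow> scalar_op G (\<phi> x)"
    and finS: "finite S"
    and c: "\<phi> (one_op G) = (\<lambda>g. c * one_op G g)"
    and yX: "inX G S y" and py: "pos_op G y" and xi: "fin_vec G \<xi>"
  shows "nonneg_c (c * y \<one> * (\<Sum>g\<in>{g. \<xi> g \<noteq> 0}. cnj (\<xi> g) * \<xi> g) - ip \<xi> (lam_apply G y \<xi>))"
proof -
  define F where "F = {g. \<xi> g \<noteq> 0}"
  have fF: "finite F" and FG: "F \<subseteq> carrier G" using xi by (auto simp: F_def fin_vec_def)
  obtain k where kb: "bij_betw k {0..<card F} F" using ex_bij_betw_nat_finite[OF fF] by blast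
  define n where "n = card F"
  have kb': "bij_betw k {..<n} F" using kb by (simp add: n_def atLeast0LessThan)
  have kG: "\<And>i. i < n \<Longrightarrow> k i \<in> carrier G" using kb' FG by (auto simp: bij_betw_def)
  have kinj: "\<And>i j. i < n \<Longrightarrow> j < n \<Longrightarrow> k i = k j \<Longrightarrow> i = j" using kb' by (auto simp: bij_betw_def inj_on_def)
  define Y where "Y = (\<lambda>i j t. if t = k i \<otimes> inv (k j) then y t else 0)"
  have fy: "finite {t. y t \<noteq> 0}" by (rule inX_fin[OF finS yX])
  have YX: "inX G S (Y i j)" for i j using yX by (auto simp: Y_def inX_def)
  have mY: "mpos G n Y" unfolding Y_def by (rule fell_mpos[OF fy py kG])
  have mW: "mpos G n (\<lambda>i j g. \<phi> (Y i j) g - Y i j g)"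
    using CP YX mY unfolding CP_X_def by blast
  define v where "v = (\<lambda>i w. if w = k i then \<xi> (k i) else 0)"
  have fv: "fin_vec G (v i)" if "i < n" for i
    unfolding fin_vec_def v_def using kG[OF that] by (auto intro: finite_subset[of _ "{k i}"])
  have nn: "nonneg_c (\<Sum>i<n. \<Sum>j<n. ip (v i) (lam_apply G (\<lambda>g. \<phi> (Y i j) g - Y i j g) (v j)))"
    using mW fv unfolding mpos_def by blast
  have trm: "ip (v i) (lam_apply G (\<lambda>g. \<phi> (Y i j) g - Y i j g) (v j)) =
     (if i = j then cnj (\<xi> (k i)) * (c * y \<one>) * \<xi> (k i) else 0) - cnj (\<xi> (k i)) * y (k i \<otimes> inv (k j)) * \<xi> (k j)"
    if i: "i < n" and j: "j < n" for i j
  proof -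
    have ki: "k i \<in> carrier G" and kj: "k j \<in> carrier G" using kG i j by auto
    have pX: "inX G S (\<phi> (Y i j))" using lin YX unfolding lin_X_def by blast
    have fW: "finite {t. \<phi> (Y i j) t - Y i j t \<noteq> 0}"
      using inX_fin[OF finS pX] inX_fin[OF finS YX] by (auto intro: finite_subset[of _ "{t. \<phi> (Y i j) t \<noteq> 0} \<union> {t. Y i j t \<noteq> 0}"])
    have "ip (v i) (lam_apply G (\<lambda>g. \<phi> (Y i j) g - Y i j g) (v j)) =
        (\<Sum>a\<in>{k i}. \<Sum>b\<in>{k j}. cnj (v i a) * (\<phi> (Y i j) (a \<otimes> inv b) - Y i j (a \<otimes> inv b)) * v j b)"
      by (rule ip_lam[OF fW]) (use ki kj fv i j in \<open>auto simp: v_def split: if_splits\<close>)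
    also have "\<dots> = cnj (\<xi> (k i)) * (\<phi> (Y i j) (k i \<otimes> inv (k j)) - y (k i \<otimes> inv (k j))) * \<xi> (k j)"
      by (simp add: v_def Y_def)
    also have "\<phi> (Y i j) (k i \<otimes> inv (k j)) = (if i = j then c * y \<one> else 0)"
    proof (cases "i = j")
      case True
      have "Y i j = (\<lambda>t. y \<one> * one_op G t)" using True ki by (auto simp: Y_def one_op_def r_inv)
      then have "\<phi> (Y i j) = (\<lambda>t. y \<one> * \<phi> (one_op G) t)" using lin inX_one unfolding lin_X_def by metis
      then have "\<phi> (Y i j) = (\<lambda>t. y \<one> * (c * one_op G t))" by (simp add: c)
      then show ?thesis using True ki by (simp add: one_op_def r_inv)
    next
      case False
      obtain z where z: "\<phi> (Y i j) = (\<lambda>g. z * one_op G g)" using sc YX unfolding scalar_op_def by blast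
      have "k i \<otimes> inv (k j) \<noteq> \<one>" using False kinj[OF i j] ki kj inv_solve_right'[of \<one> "k i" "k j"] by auto
      then show ?thesis using False by (simp add: z one_op_def)
    qed
    finally show ?thesis by (simp add: algebra_simps)
  qed
  have "(\<Sum>i<n. \<Sum>j<n. ip (v i) (lam_apply G (\<lambda>g. \<phi> (Y i j) g - Y i j g) (v j))) =
      (\<Sum>i<n. \<Sum>j<n. (if i = j then cnj (\<xi> (k i)) * (c * y \<one>) * \<xi> (k i) else 0) - cnj (\<xi> (k i)) * y (k i \<otimes> inv (k j)) * \<xi> (k j))"
    by (simp add: trm)
  also have "\<dots> = (\<Sum>i<n. cnj (\<xi> (k i)) * (c * y \<one>) * \<xi> (k i)) - (\<Sum>i<n. \<Sum>j<n. cnj (\<xi> (k i)) * y (k i \<otimes> inv (k j)) * \<xi> (k j))"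
    by (simp add: sum_subtractf sum.delta)
  also have "(\<Sum>i<n. cnj (\<xi> (k i)) * (c * y \<one>) * \<xi> (k i)) = (\<Sum>w\<in>F. cnj (\<xi> w) * (c * y \<one>) * \<xi> w)"
    by (rule sum.reindex_bij_betw[OF kb'])
  also have "(\<Sum>i<n. \<Sum>j<n. cnj (\<xi> (k i)) * y (k i \<otimes> inv (k j)) * \<xi> (k j)) = (\<Sum>w\<in>F. \<Sum>w'\<in>F. cnj (\<xi> w) * y (w \<otimes> inv w') * \<xi> w')"
  proof -
    have "(\<Sum>i<n. \<Sum>j<n. cnj (\<xi> (k i)) * y (k i \<otimes> inv (k j)) * \<xi> (k j)) = (\<Sum>i<n. \<Sum>w'\<in>F. cnj (\<xi> (k i)) * y (k i \<otimes> inv w') * \<xi> w')"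
      by (rule sum.cong[OF refl], rule sum.reindex_bij_betw[OF kb'])
    also have "\<dots> = (\<Sum>w\<in>F. \<Sum>w'\<in>F. cnj (\<xi> w) * y (w \<otimes> inv w') * \<xi> w')"
      by (rule sum.reindex_bij_betw[OF kb', where g="\<lambda>w. \<Sum>w'\<in>F. cnj (\<xi> w) * y (w \<otimes> inv w') * \<xi> w'"])
    finally show ?thesis .
  qed
  also have "\<dots> = ip \<xi> (lam_apply G y \<xi>)"
    by (rule ip_lam[OF fy fF FG fF FG xi xi, symmetric]) (auto simp: F_def)
  finally show ?thesis using nn unfolding F_def by (simp add: sum_distrib_left mult_ac)
qed

end


definition S2 :: "('a \<Rightarrow> complex) \<Rightarrow> real" where
  "S2 \<xi> = (\<Sum>g\<in>{g. \<xi> g \<noteq> 0}. (cmod (\<xi> g))\<^sup>2)"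

lemma N_eq: "(\<Sum>g\<in>{g. \<xi> g \<noteq> 0}. cnj (\<xi> g) * \<xi> g) = complex_of_real (S2 \<xi>)"
  unfolding S2_def of_real_sum
proof (rule sum.cong[OF refl])
  fix g show "cnj (\<xi> g) * \<xi> g = complex_of_real ((cmod (\<xi> g))\<^sup>2)"
    by (subst complex_norm_square) (simp add: mult.commute)
qed

lemma S2_nonneg: "S2 \<xi> \<ge> 0" unfolding S2_def by (simp add: sum_nonneg)

lemma fin_supp_comb: "finite {t. y1 t \<noteq> 0} \<Longrightarrow> finite {t. y2 t \<noteq> 0} \<Longrightarrow> finite {t. (\<alpha>::complex) * y1 t + \<beta> * y2 t \<noteq> 0}"
  by (rule finite_subset[of _ "{t. y1 t \<noteq> 0} \<union> {t. y2 t \<noteq> 0}"]) auto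

lemma fin_one: "finite {t. one_op G t \<noteq> 0}"
  by (rule finite_subset[of _ "{\<one>\<^bsub>G\<^esub>}"]) (auto simp: one_op_def)

context group begin

lemma fin_vec_one: "fin_vec G (one_op G)"
  unfolding fin_vec_def one_op_def by (auto intro: finite_subset[of _ "{\<one>}"])

lemma ip_lam_lin:
  assumes f1: "finite {t. y1 t \<noteq> 0}" and f2: "finite {t. y2 t \<noteq> 0}" and xi: "fin_vec G \<xi>"
  shows "ip \<xi> (lam_apply G (\<lambda>g. \<alpha> * y1 g + \<beta> * y2 g) \<xi>) = \<alpha> * ip \<xi> (lam_apply G y1 \<xi>) + \<beta> * ip \<xi> (lam_apply G y2 \<xi>)"
proof -
  define F where "F = {g. \<xi> g \<noteq> 0}"
  have fF: "finite F" and FG: "F \<subseteq> carrier G" using xi by (auto simp: F_def fin_vec_def)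
  have s: "\<And>h. \<xi> h \<noteq> 0 \<Longrightarrow> h \<in> F" by (simp add: F_def)
  have e0: "ip \<xi> (lam_apply G (\<lambda>g. \<alpha> * y1 g + \<beta> * y2 g) \<xi>) = (\<Sum>k\<in>F. \<Sum>h\<in>F. cnj (\<xi> k) * (\<alpha> * y1 (k \<otimes> inv h) + \<beta> * y2 (k \<otimes> inv h)) * \<xi> h)"
    by (rule ip_lam[OF fin_supp_comb[OF f1 f2] fF FG fF FG xi xi s s])
  have e1: "ip \<xi> (lam_apply G y1 \<xi>) = (\<Sum>k\<in>F. \<Sum>h\<in>F. cnj (\<xi> k) * y1 (k \<otimes> inv h) * \<xi> h)"
    by (rule ip_lam[OF f1 fF FG fF FG xi xi s s])
  have e2: "ip \<xi> (lam_apply G y2 \<xi>) = (\<Sum>k\<in>F. \<Sum>h\<in>F. cnj (\<xi> k) * y2 (k \<otimes> inv h) * \<xi> h)"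
    by (rule ip_lam[OF f2 fF FG fF FG xi xi s s])
  show ?thesis unfolding e0 e1 e2
    by (simp add: ring_distribs sum.distrib sum_distrib_left mult_ac)
qed

lemma ip_one: assumes xi: "fin_vec G \<xi>"
  shows "ip \<xi> (lam_apply G (one_op G) \<xi>) = complex_of_real (S2 \<xi>)"
proof -
  define F where "F = {g. \<xi> g \<noteq> 0}"
  have fF: "finite F" and FG: "F \<subseteq> carrier G" using xi by (auto simp: F_def fin_vec_def)
  have s: "\<And>h. \<xi> h \<noteq> 0 \<Longrightarrow> h \<in> F" by (simp add: F_def)
  have "ip \<xi> (lam_apply G (one_op G) \<xi>) = (\<Sum>k\<in>F. \<Sum>h\<in>F. cnj (\<xi> k) * one_op G (k \<otimes> inv h) * \<xi> h)"
    by (rule ip_lam[OF fin_one fF FG fF FG xi xi s s])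
  also have "\<dots> = (\<Sum>k\<in>F. \<Sum>h\<in>F. if h = k then cnj (\<xi> k) * \<xi> h else 0)"
  proof (intro sum.cong refl)
    fix k h assume "k \<in> F" "h \<in> F"
    then have k: "k \<in> carrier G" and h: "h \<in> carrier G" using FG by auto
    have "(k \<otimes> inv h = \<one>) = (h = k)" using inv_solve_right'[of \<one> k h] k h by auto
    then show "cnj (\<xi> k) * one_op G (k \<otimes> inv h) * \<xi> h = (if h = k then cnj (\<xi> k) * \<xi> h else 0)"
      by (auto simp: one_op_def)
  qed
  also have "\<dots> = (\<Sum>k\<in>F. cnj (\<xi> k) * \<xi> k)" using fF by (simp add: sum.delta)
  finally show ?thesis using N_eq unfolding F_def by metis
qed

lemma cond_exp_eq: assumes "finite {t. x t \<noteq> 0}" shows "cond_exp G x = x \<one>"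
proof -
  have "cond_exp G x = (\<Sum>k\<in>{\<one>}. \<Sum>h\<in>{\<one>}. cnj (one_op G k) * x (k \<otimes> inv h) * one_op G h)"
    unfolding cond_exp_def by (rule ip_lam[OF assms _ _ _ _ fin_vec_one fin_vec_one]) (auto simp: one_op_def split: if_splits)
  then show ?thesis by (simp add: one_op_def)
qed

lemma shift_le:
  fixes f :: "'a \<Rightarrow> real"
  assumes fF: "finite F" and FG: "F \<subseteq> carrier G" and a: "a \<in> carrier G"
    and z: "\<And>u. u \<notin> F \<Longrightarrow> f u = 0" and nn: "\<And>u. f u \<ge> 0"
  shows "(\<Sum>k\<in>F. f (a \<otimes> k)) \<le> (\<Sum>u\<in>F. f u)"
proof -
  have inj: "inj_on (\<lambda>k. a \<otimes> k) F"
    by (rule inj_onI) (use FG a in \<open>metis Units_l_cancel Units_eq subsetD\<close>)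
  have "(\<Sum>k\<in>F. f (a \<otimes> k)) = (\<Sum>u\<in>(\<lambda>k. a \<otimes> k) ` F. f u)"
    using sum.reindex[OF inj, of f] by (simp add: comp_def)
  also have "\<dots> = (\<Sum>u\<in>(\<lambda>k. a \<otimes> k) ` F \<inter> F. f u)"
    by (rule sum.mono_neutral_right) (use fF z in auto)
  also have "\<dots> \<le> (\<Sum>u\<in>F. f u)"
    by (rule sum_mono2) (use fF nn in auto)
  finally show ?thesis .
qed

lemma q_bound:
  assumes fx: "finite {t. x t \<noteq> 0}" and xi: "fin_vec G \<xi>"
  shows "cmod (ip \<xi> (lam_apply G x \<xi>)) \<le> (\<Sum>t\<in>{t\<in>carrier G. x t \<noteq> 0}. cmod (x t)) * S2 \<xi>"
proof -
  define F where "F = {g. \<xi> g \<noteq> 0}"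
  define T where "T = {t\<in>carrier G. x t \<noteq> 0}"
  have fT: "finite T" using fx by (auto simp: T_def intro: finite_subset)
  have fF: "finite F" and FG: "F \<subseteq> carrier G" using xi by (auto simp: F_def fin_vec_def)
  have "ip \<xi> (lam_apply G x \<xi>) = (\<Sum>k\<in>F. cnj (\<xi> k) * lam_apply G x \<xi> k)"
    by (rule ip_eq_sum[OF fF lam_supp_fin[OF fx xi]]) (auto simp: F_def)
  also have "\<dots> = (\<Sum>k\<in>F. cnj (\<xi> k) * (\<Sum>t\<in>T. x t * \<xi> (inv t \<otimes> k)))"
    by (rule sum.cong[OF refl]) (use FG in \<open>auto simp: lam_apply_def T_def\<close>)
  finally have eq: "ip \<xi> (lam_apply G x \<xi>) = (\<Sum>k\<in>F. \<Sum>t\<in>T. cnj (\<xi> k) * x t * \<xi> (inv t \<otimes> k))"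
    by (simp add: sum_distrib_left mult_ac)
  have "cmod (ip \<xi> (lam_apply G x \<xi>)) \<le> (\<Sum>k\<in>F. \<Sum>t\<in>T. cmod (cnj (\<xi> k) * x t * \<xi> (inv t \<otimes> k)))"
    unfolding eq by (rule order_trans[OF norm_sum sum_mono]) (rule norm_sum)
  also have "\<dots> = (\<Sum>t\<in>T. cmod (x t) * (\<Sum>k\<in>F. cmod (\<xi> k) * cmod (\<xi> (inv t \<otimes> k))))"
    by (subst sum.swap) (simp add: sum_distrib_left norm_mult mult_ac)
  also have "\<dots> \<le> (\<Sum>t\<in>T. cmod (x t) * S2 \<xi>)"
  proof (rule sum_mono, rule mult_left_mono)
    fix t assume t: "t \<in> T"
    then have it: "inv t \<in> carrier G" by (auto simp: T_def)
    have "(\<Sum>k\<in>F. cmod (\<xi> k) * cmod (\<xi> (inv t \<otimes> k))) \<le> (\<Sum>k\<in>F. ((cmod (\<xi> k))\<^sup>2 + (cmod (\<xi> (inv t \<otimes> k)))\<^sup>2) / 2)"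
    proof (rule sum_mono)
      fix k
      have "0 \<le> (cmod (\<xi> k) - cmod (\<xi> (inv t \<otimes> k)))\<^sup>2" by simp
      then show "cmod (\<xi> k) * cmod (\<xi> (inv t \<otimes> k)) \<le> ((cmod (\<xi> k))\<^sup>2 + (cmod (\<xi> (inv t \<otimes> k)))\<^sup>2) / 2"
        by (simp add: power2_eq_square algebra_simps)
    qed
    also have "\<dots> = ((\<Sum>k\<in>F. (cmod (\<xi> k))\<^sup>2) + (\<Sum>k\<in>F. (cmod (\<xi> (inv t \<otimes> k)))\<^sup>2)) / 2"
      by (subst sum_divide_distrib[symmetric]) (simp add: sum.distrib)
    also have "(\<Sum>k\<in>F. (cmod (\<xi> (inv t \<otimes> k)))\<^sup>2) \<le> (\<Sum>k\<in>F. (cmod (\<xi> k))\<^sup>2)"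
      by (rule shift_le[OF fF FG it, of "\<lambda>u. (cmod (\<xi> u))\<^sup>2"]) (auto simp: F_def)
    finally show "(\<Sum>k\<in>F. cmod (\<xi> k) * cmod (\<xi> (inv t \<otimes> k))) \<le> S2 \<xi>"
      unfolding S2_def F_def by simp
  qed simp
  finally show ?thesis by (simp add: T_def sum_distrib_right)
qed

lemma zero_form:
  assumes fx: "finite {t. x t \<noteq> 0}" and x1: "x \<one> = 0" and sg: "(\<sigma>::real) \<noteq> 0"
    and q: "\<And>\<xi>. fin_vec G \<xi> \<Longrightarrow> \<sigma> * Re (ip \<xi> (lam_apply G x \<xi>)) \<le> 0 \<and> Im (ip \<xi> (lam_apply G x \<xi>)) = 0"
    and t: "t \<in> carrier G"
  shows "x t = 0"
proof (cases "t = \<one>")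
  case True then show ?thesis using x1 by simp
next
  case False
  have val: "ip (\<lambda>w. if w = t then 1 else if w = \<one> then s else 0) (lam_apply G x (\<lambda>w. if w = t then 1 else if w = \<one> then s else 0))
      = s * x t + cnj s * x (inv t)" for s
  proof -
    define \<xi> where "\<xi> = (\<lambda>w. if w = t then 1 else if w = \<one> then s else (0::complex))"
    have xi: "fin_vec G \<xi>" unfolding fin_vec_def \<xi>_def using t by (auto intro: finite_subset[of _ "{t, \<one>}"])
    have "ip \<xi> (lam_apply G x \<xi>) = (\<Sum>k\<in>{t, \<one>}. \<Sum>h\<in>{t, \<one>}. cnj (\<xi> k) * x (k \<otimes> inv h) * \<xi> h)"
      by (rule ip_lam[OF fx _ _ _ _ xi xi]) (use t in \<open>auto simp: \<xi>_def split: if_splits\<close>)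
    also have "\<dots> = s * x t + cnj s * x (inv t)"
      using False t x1 by (simp add: \<xi>_def r_inv)
    finally show ?thesis unfolding \<xi>_def .
  qed
  have fv: "fin_vec G (\<lambda>w. if w = t then 1 else if w = \<one> then s else 0)" for s
    unfolding fin_vec_def using t by (auto intro: finite_subset[of _ "{t, \<one>}"])
  have q': "\<sigma> * Re (s * x t + cnj s * x (inv t)) \<le> 0 \<and> Im (s * x t + cnj s * x (inv t)) = 0" for s
    using q[OF fv[of s]] val[of s] by simp
  have z: "s * x t + cnj s * x (inv t) = 0" for s
  proof -
    define v where "v = s * x t + cnj s * x (inv t)"
    have neg: "(-s) * x t + cnj (-s) * x (inv t) = - v" by (simp add: v_def)
    have A: "\<sigma> * Re v \<le> 0" using q'[of s] by (simp add: v_def)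
    have B: "\<sigma> * Re (- v) \<le> 0" using q'[of "-s"] by (simp only: neg)
    have "\<sigma> * Re v = 0" using A B by simp
    then have "Re v = 0" using sg by simp
    moreover have "Im v = 0" using q'[of s] by (simp add: v_def)
    ultimately show ?thesis by (simp add: complex_eq_iff v_def)
  qed
  have "\<i> * (x t - x (inv t)) = 0" using z[of \<i>] by (simp add: algebra_simps)
  then have "x t = x (inv t)" by simp
  then show ?thesis using z[of 1] by simp
qed

end


lemma ip_cnj:
  assumes "finite {g. \<eta> g \<noteq> 0}" "finite {g. \<zeta> g \<noteq> 0}"
  shows "cnj (ip \<eta> \<zeta>) = ip \<zeta> \<eta>"
proof -
  let ?F = "{g. \<eta> g \<noteq> 0} \<union> {g. \<zeta> g \<noteq> 0}"
  have "ip \<eta> \<zeta> = (\<Sum>g\<in>?F. cnj (\<eta> g) * \<zeta> g)" by (rule ip_eq_sum) (use assms in auto)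
  moreover have "ip \<zeta> \<eta> = (\<Sum>g\<in>?F. cnj (\<zeta> g) * \<eta> g)" by (rule ip_eq_sum) (use assms in auto)
  ultimately show ?thesis by (simp add: cnj_sum mult.commute)
qed

lemma small_le0: fixes r s :: real assumes "s \<ge> 0" "\<And>e. e > 0 \<Longrightarrow> r \<le> e * s" shows "r \<le> 0"
proof (rule ccontr)
  assume "\<not> r \<le> 0"
  then have r: "r > 0" by simp
  have "r \<le> (r / (2 * (s + 1))) * s" using assms(2)[of "r / (2 * (s+1))"] r assms(1) by simp
  also have "\<dots> < r" using r assms(1) by (simp add: field_simps) (smt (verit) mult_nonneg_nonneg)
  finally show False by simp
qed

context group begin

lemma pos_one: "pos_op G (one_op G)"
  unfolding pos_op_def nonneg_c_def by (simp add: ip_one S2_nonneg)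

lemma S2_one: "S2 (one_op G) = 1"
proof -
  have "{g. one_op G g \<noteq> 0} = {\<one>}" by (auto simp: one_op_def)
  then show ?thesis unfolding S2_def by (simp add: one_op_def)
qed

lemma c_real:
  assumes CP: "CP_X G S (\<lambda>x g. \<phi> x g - x g)" and lin: "lin_X G S \<phi>"
    and sc: "\<forall>x. inX G S x \<longrightarrow> scalar_op G (\<phi> x)" and finS: "finite S"
    and c: "\<phi> (one_op G) = (\<lambda>g. c * one_op G g)"
  shows "Im c = 0 \<and> Re c \<ge> 1"
proof -
  have "nonneg_c (c * one_op G \<one> * (\<Sum>g\<in>{g. one_op G g \<noteq> 0}. cnj (one_op G g) * one_op G g) - ip (one_op G) (lam_apply G (one_op G) (one_op G)))"
    by (rule main_ineq[OF CP lin sc finS c inX_one pos_one fin_vec_one])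
  then show ?thesis unfolding N_eq ip_one[OF fin_vec_one] S2_one by (simp add: one_op_def nonneg_c_def)
qed

lemma rho_le:
  assumes CP: "CP_X G S (\<lambda>x g. \<phi> x g - x g)" and lin: "lin_X G S \<phi>"
    and sc: "\<forall>x. inX G S x \<longrightarrow> scalar_op G (\<phi> x)" and finS: "finite S"
    and c: "\<phi> (one_op G) = (\<lambda>g. c * one_op G g)"
    and xX: "inX G S x" and sa: "self_adj G x" and nz: "nonzero_op G x" and ce: "cond_exp G x = 0"
  shows "rho_x G x \<le> Re c - 1"
proof -
  define cr where "cr = Re c"
  have cc: "c = complex_of_real cr" and cr1: "cr \<ge> 1" using c_real[OF CP lin sc finS c] by (auto simp: cr_def complex_eq_iff)
  have fx: "finite {t. x t \<noteq> 0}" by (rule inX_fin[OF finS xX])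
  have x1: "x \<one> = 0" using ce cond_exp_eq[OF fx] by simp
  define q where "q = (\<lambda>\<xi>. ip \<xi> (lam_apply G x \<xi>))"
  have imq: "Im (q \<xi>) = 0" if xi: "fin_vec G \<xi>" for \<xi>
  proof -
    have "q \<xi> = ip (lam_apply G x \<xi>) \<xi>" using sa xi unfolding self_adj_def q_def by blast
    also have "\<dots> = cnj (q \<xi>)" unfolding q_def by (rule ip_cnj[symmetric]) (use lam_supp_fin[OF fx xi] xi in \<open>auto simp: fin_vec_def\<close>)
    finally show ?thesis by (simp add: complex_eq_iff)
  qed
  define A where "A = {a::real. a > 0 \<and> pos_op G (\<lambda>g. complex_of_real a * one_op G g - x g)}"
  define B where "B = {b::real. b > 0 \<and> pos_op G (\<lambda>g. complex_of_real b * one_op G g + x g)}"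
  have ipP: "ip \<xi> (lam_apply G (\<lambda>g. complex_of_real r * one_op G g + x g) \<xi>) = complex_of_real (r * S2 \<xi>) + q \<xi>"
    if xi: "fin_vec G \<xi>" for r \<xi>
    using ip_lam_lin[OF fin_one[of G] fx xi, where \<alpha>="complex_of_real r" and \<beta>=1] ip_one[OF xi] by (simp add: q_def)
  have ipM: "ip \<xi> (lam_apply G (\<lambda>g. complex_of_real r * one_op G g - x g) \<xi>) = complex_of_real (r * S2 \<xi>) - q \<xi>"
    if xi: "fin_vec G \<xi>" for r \<xi>
    using ip_lam_lin[OF fin_one[of G] fx xi, where \<alpha>="complex_of_real r" and \<beta>="-1"] ip_one[OF xi] by (simp add: q_def)
  have inA: "r \<in> A \<longleftrightarrow> r > 0 \<and> (\<forall>\<xi>. fin_vec G \<xi> \<longrightarrow> Re (q \<xi>) \<le> r * S2 \<xi>)" for r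
    unfolding A_def pos_op_def nonneg_c_def using imq ipM by auto
  have inB: "r \<in> B \<longleftrightarrow> r > 0 \<and> (\<forall>\<xi>. fin_vec G \<xi> \<longrightarrow> - Re (q \<xi>) \<le> r * S2 \<xi>)" for r
    unfolding B_def pos_op_def nonneg_c_def using imq ipP by auto
  have XP: "inX G S (\<lambda>g. complex_of_real r * one_op G g + x g)" for r
    using xX inX_one[of G S] unfolding inX_def by auto
  have XM: "inX G S (\<lambda>g. complex_of_real r * one_op G g - x g)" for r
    using xX inX_one[of G S] unfolding inX_def by auto
  have MLi: "nonneg_c (c * y \<one> * complex_of_real (S2 \<xi>) - ip \<xi> (lam_apply G y \<xi>))"
    if "inX G S y" "pos_op G y" "fin_vec G \<xi>" for y \<xi>
    using main_ineq[OF CP lin sc finS c that] N_eq by metis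
  have KB: "Re (q \<xi>) \<le> (cr - 1) * b * S2 \<xi>" if b: "b \<in> B" and xi: "fin_vec G \<xi>" for b \<xi>
  proof -
    have "pos_op G (\<lambda>g. complex_of_real b * one_op G g + x g)" using b by (simp add: B_def)
    from MLi[OF XP this xi] show ?thesis using x1 unfolding ipP[OF xi] cc
      by (simp add: nonneg_c_def one_op_def algebra_simps)
  qed
  have KA: "- Re (q \<xi>) \<le> (cr - 1) * a * S2 \<xi>" if a: "a \<in> A" and xi: "fin_vec G \<xi>" for a \<xi>
  proof -
    have "pos_op G (\<lambda>g. complex_of_real a * one_op G g - x g)" using a by (simp add: A_def)
    from MLi[OF XM this xi] show ?thesis using x1 unfolding ipM[OF xi] cc
      by (simp add: nonneg_c_def one_op_def algebra_simps)
  qed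
  define M where "M = (\<Sum>t\<in>{t\<in>carrier G. x t \<noteq> 0}. cmod (x t))"
  have M0: "M \<ge> 0" unfolding M_def by (simp add: sum_nonneg)
  have bnd: "\<bar>Re (q \<xi>)\<bar> \<le> M * S2 \<xi>" if "fin_vec G \<xi>" for \<xi>
    using q_bound[OF fx that] abs_Re_le_cmod[of "q \<xi>"] unfolding M_def q_def by linarith
  have MA: "M + 1 \<in> A" unfolding inA
  proof (intro conjI allI impI)
    show "M + 1 > 0" using M0 by simp
    fix \<xi> :: "'a \<Rightarrow> complex" assume xi: "fin_vec G \<xi>"
    have "M * S2 \<xi> \<le> (M+1) * S2 \<xi>" using S2_nonneg[of \<xi>] by (simp add: mult_right_mono)
    then show "Re (q \<xi>) \<le> (M + 1) * S2 \<xi>" using bnd[OF xi] by linarith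
  qed
  have MB: "M + 1 \<in> B" unfolding inB
  proof (intro conjI allI impI)
    show "M + 1 > 0" using M0 by simp
    fix \<xi> :: "'a \<Rightarrow> complex" assume xi: "fin_vec G \<xi>"
    have "M * S2 \<xi> \<le> (M+1) * S2 \<xi>" using S2_nonneg[of \<xi>] by (simp add: mult_right_mono)
    then show "- Re (q \<xi>) \<le> (M + 1) * S2 \<xi>" using bnd[OF xi] by linarith
  qed
  have contra: False if "\<sigma> \<noteq> 0" "\<And>\<xi>. fin_vec G \<xi> \<Longrightarrow> \<sigma> * Re (q \<xi>) \<le> 0" for \<sigma>
  proof -
    have "x t = 0" if "t \<in> carrier G" for t
      by (rule zero_form[OF fx x1 \<open>\<sigma> \<noteq> 0\<close> _ that]) (use \<open>\<And>\<xi>. fin_vec G \<xi> \<Longrightarrow> \<sigma> * Re (q \<xi>) \<le> 0\<close> imq in \<open>auto simp: q_def\<close>)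
    then have "lam_apply G x \<xi> = (\<lambda>_. 0)" for \<xi> unfolding lam_apply_def by auto
    then show False using nz unfolding nonzero_op_def by auto
  qed
  have cr1': "cr > 1"
  proof (rule ccontr)
    assume "\<not> cr > 1" then have "cr = 1" using cr1 by simp
    then show False using contra[of 1] KB[OF MB] by simp
  qed
  have bA: "bdd_below A" unfolding bdd_below_def A_def by (rule exI[of _ 0]) auto
  have bB: "bdd_below B" unfolding bdd_below_def B_def by (rule exI[of _ 0]) auto
  define a where "a = Inf A"
  define b where "b = Inf B"
  have a0: "a > 0"
  proof (rule ccontr)
    assume "\<not> a > 0"
    have "Re (q \<xi>) \<le> 0" if xi: "fin_vec G \<xi>" for \<xi>
    proof (rule small_le0[OF S2_nonneg])
      fix e :: real assume e: "e > 0"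
      have "Inf A < e" using \<open>\<not> a > 0\<close> e by (simp add: a_def)
      then obtain a' where "a' \<in> A" "a' < e" using cInf_lessD[of A e] MA by blast
      then show "Re (q \<xi>) \<le> e * S2 \<xi>" using inA xi S2_nonneg[of \<xi>]
        by (meson less_le_not_le mult_right_mono order_trans)
    qed
    then show False using contra[of 1] by simp
  qed
  have b0: "b > 0"
  proof (rule ccontr)
    assume "\<not> b > 0"
    have "- Re (q \<xi>) \<le> 0" if xi: "fin_vec G \<xi>" for \<xi>
    proof (rule small_le0[OF S2_nonneg])
      fix e :: real assume e: "e > 0"
      have "Inf B < e" using \<open>\<not> b > 0\<close> e by (simp add: b_def)
      then obtain b' where "b' \<in> B" "b' < e" using cInf_lessD[of B e] MB by blast
      then show "- Re (q \<xi>) \<le> e * S2 \<xi>" using inB xi S2_nonneg[of \<xi>]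
        by (meson less_le_not_le mult_right_mono order_trans)
    qed
    then show False using contra[of "-1"] by simp
  qed
  have ab: "a \<le> (cr - 1) * b"
  proof -
    have "a / (cr - 1) \<le> b'" if "b' \<in> B" for b'
    proof -
      have "(cr - 1) * b' \<in> A" unfolding inA using KB[OF that] cr1' that inB
        by (auto simp: mult_ac)
      then have "a \<le> (cr - 1) * b'" unfolding a_def by (rule cInf_lower[OF _ bA])
      then show ?thesis using cr1' by (simp add: divide_le_eq mult_ac)
    qed
    then have "a / (cr - 1) \<le> b" unfolding b_def using MB by (intro cInf_greatest) auto
    then show ?thesis using cr1' by (simp add: divide_le_eq mult_ac)
  qed
  have ba: "b \<le> (cr - 1) * a"
  proof -
    have "b / (cr - 1) \<le> a'" if "a' \<in> A" for a'
    proof -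
      have "(cr - 1) * a' \<in> B" unfolding inB using KA[OF that] cr1' that inA
        by (auto simp: mult_ac)
      then have "b \<le> (cr - 1) * a'" unfolding b_def by (rule cInf_lower[OF _ bB])
      then show ?thesis using cr1' by (simp add: divide_le_eq mult_ac)
    qed
    then have "b / (cr - 1) \<le> a" unfolding a_def using MA by (intro cInf_greatest) auto
    then show ?thesis using cr1' by (simp add: divide_le_eq mult_ac)
  qed
  have "rho_x G x = max (a / b) (b / a)"
    unfolding rho_x_def const_a_def const_b_def a_def b_def A_def B_def by simp
  also have "\<dots> \<le> cr - 1" using ab ba a0 b0 by (simp add: divide_le_eq mult_ac)
  finally show ?thesis by (simp add: cr_def)
qed

end


context group begin

lemma lam_scalar:
  assumes xi: "fin_vec G \<xi>"
  shows "lam_apply G (\<lambda>g. c * one_op G g) \<xi> = (\<lambda>h. c * \<xi> h)"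
proof
  fix h
  have fc: "finite {t. c * one_op G t \<noteq> 0}"
    by (rule finite_subset[of _ "{\<one>}"]) (auto simp: one_op_def)
  show "lam_apply G (\<lambda>g. c * one_op G g) \<xi> h = c * \<xi> h"
  proof (cases "h \<in> carrier G")
    case True
    define F where "F = {g. \<xi> g \<noteq> 0}"
    have fF: "finite F" and FG: "F \<subseteq> carrier G" using xi by (auto simp: F_def fin_vec_def)
    have "lam_apply G (\<lambda>g. c * one_op G g) \<xi> h = (\<Sum>k\<in>F. c * one_op G (h \<otimes> inv k) * \<xi> k)"
      by (rule lam_inner[OF fc fF FG _ True]) (auto simp: F_def)
    also have "\<dots> = (\<Sum>k\<in>F. if k = h then c * \<xi> k else 0)"
    proof (rule sum.cong[OF refl])
      fix k assume "k \<in> F" then have k: "k \<in> carrier G" using FG by auto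
      have "(h \<otimes> inv k = \<one>) = (k = h)" using inv_solve_right'[of \<one> h k] k True by auto
      then show "c * one_op G (h \<otimes> inv k) * \<xi> k = (if k = h then c * \<xi> k else 0)" by (auto simp: one_op_def)
    qed
    also have "\<dots> = c * \<xi> h" using fF by (auto simp: sum.delta' F_def)
    finally show ?thesis .
  next
    case False
    then have "\<xi> h = 0" using xi by (auto simp: fin_vec_def)
    then show ?thesis using False by (simp add: lam_apply_def)
  qed
qed

lemma vnorm_scale: "vnorm (\<lambda>h. c * \<xi> h) = cmod c * vnorm \<xi>"
proof (cases "c = 0")
  case True then show ?thesis by (simp add: vnorm_def)
next
  case False
  have "vnorm (\<lambda>h. c * \<xi> h) = sqrt (\<Sum>g\<in>{g. \<xi> g \<noteq> 0}. (cmod c)\<^sup>2 * (cmod (\<xi> g))\<^sup>2)"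
    using False by (simp add: vnorm_def norm_mult power_mult_distrib)
  also have "\<dots> = cmod c * vnorm \<xi>"
    by (simp add: vnorm_def sum_distrib_left[symmetric] real_sqrt_mult)
  finally show ?thesis .
qed

lemma op_norm_ge:
  shows "cmod c \<le> op_norm G (\<lambda>g. c * one_op G g)"
proof -
  define P where "P = {vnorm (lam_apply G (\<lambda>g. c * one_op G g) \<xi>) | \<xi>. fin_vec G \<xi> \<and> vnorm \<xi> \<le> 1}"
  have v1: "vnorm (one_op G) = 1"
  proof -
    have "{g. one_op G g \<noteq> 0} = {\<one>}" by (auto simp: one_op_def)
    then show ?thesis unfolding vnorm_def by (simp add: one_op_def)
  qed
  have mem: "cmod c \<in> P" unfolding P_def
    using fin_vec_one v1 lam_scalar[OF fin_vec_one, of c] vnorm_scale[of c "one_op G"] by force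
  have bdd: "bdd_above P" unfolding P_def bdd_above_def
  proof (rule exI[of _ "cmod c"], safe)
    fix \<xi> assume "fin_vec G \<xi>" "vnorm \<xi> \<le> 1"
    then show "vnorm (lam_apply G (\<lambda>g. c * one_op G g) \<xi>) \<le> cmod c"
      by (simp add: lam_scalar vnorm_scale mult_left_le)
  qed
  show ?thesis unfolding op_norm_def using cSup_upper[OF mem bdd] by (simp add: P_def)
qed

end

theorem proposition4p10:
  fixes G :: "('a, 'b) monoid_scheme" and S :: "'a set"
  assumes "group G"
    and "countable (carrier G)"
    and "finite S"
    and "S \<subseteq> carrier G"
    and "\<forall>s\<in>S. inv\<^bsub>G\<^esub> s \<in> S"
    and "generate G S = carrier G"
  shows "tilde_lambda G S \<ge> 1 + rho_S G S"
proof -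
  interpret group G by fact
  show ?thesis unfolding tilde_lambda_def
  proof (rule Inf_greatest, clarify)
    fix \<phi> assume cp1: "CP1_X G S \<phi>" and sc: "\<forall>x. inX G S x \<longrightarrow> scalar_op G (\<phi> x)"
      and CP: "CP_X G S (\<lambda>x g. \<phi> x g - x g)"
    have lin: "lin_X G S \<phi>" using cp1 by (simp add: CP1_X_def CP_X_def)
    obtain c where c: "\<phi> (one_op G) = (\<lambda>g. c * one_op G g)"
      using cp1 unfolding CP1_X_def scalar_op_def by (metis mult_1 ext)
    have cr: "Im c = 0" "Re c \<ge> 1" using c_real[OF CP lin sc assms(3) c] by auto
    have cm: "cmod c = Re c" using cr by (simp add: cmod_def)
    have "rho_S G S \<le> ereal (Re c - 1)"
      unfolding rho_S_def
      by (rule Sup_least) (use rho_le[OF CP lin sc assms(3) c] in auto)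
    then have "1 + rho_S G S \<le> 1 + ereal (Re c - 1)" by (rule add_left_mono)
    also have "\<dots> = ereal (Re c)" by simp
    also have "\<dots> \<le> ereal (op_norm G (\<phi> (one_op G)))" using op_norm_ge[of c] cm c by simp
    finally show "1 + rho_S G S \<le> ereal (op_norm G (\<phi> (one_op G)))" .
  qed
qed


end
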